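(* Let $C$ be a Plotkin-optimal projective linear code over $\mathbb{Z}_4$ of type $4^{k_1}2^{k_2}$, length $n$ and minimum Lee distance $n$, with exactly two nonzero Lee weights $m$ and $n$. Let $a,b$ be nonnegative integers, not both zero. Then there exists a Plotkin-optimal projective linear code $C'$ over $\mathbb{Z}_4$ of type $4^{k_1+a}2^{k_2+b}$, length $4^a2^bn$ and minimum Lee distance $4^a2^bn$, with exactly two nonzero Lee weights $w_1=4^a2^bm$ and $w_2=4^a2^bn$, such that $A_{w_1}(C')=A_m(C)$ and $A_{w_2}(C')=4^{k_1+a}2^{k_2+b}-1-A_m(C)$.
   Context: A linear code of length $n$ over $\mathbb{Z}_4$ is a $\mathbb{Z}_4$-submodule of $\mathbb{Z}_4^n$, of type $4^{k_1}2^{k_2}$ if isomorphic to $\mathbb{Z}_4^{k_1}\times\mathbb{Z}_2^{k_2}$. Lee weight: $w_L(0)=0,w_L(1)=1,w_L(2)=2,w_L(3)=1$, additive on vectors; minimum Lee distance is the minimum nonzero Lee weight. Plotkin-optimal means $d_L=\lfloor\frac{|C|}{|C|-1}\cdot\text{length}\rfloor$; projective means the dual (with respect to $\sum x_iy_i\in\mathbb{Z}_4$) has minimum Lee distance at least $3$. $A_w(D)$ is the number of codewords of $D$ of Lee weight $w$. *)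

theory Defs
  imports Complex_Main
begin

text \<open>Elements of Z4 are represented by the integers 0,1,2,3; elements of Z2 by 0,1.
  Vectors of length n are integer lists of length n with entries in the range.\<close>

definition zvecs :: "int \<Rightarrow> nat \<Rightarrow> int list set" where
  "zvecs q n = {xs. length xs = n \<and> set xs \<subseteq> {0..q-1}}"

abbreviation z4vecs :: "nat \<Rightarrow> int list set" where "z4vecs \<equiv> zvecs 4"
abbreviation z2vecs :: "nat \<Rightarrow> int list set" where "z2vecs \<equiv> zvecs 2"

definition vadd :: "int \<Rightarrow> int list \<Rightarrow> int list \<Rightarrow> int list" where
  "vadd q xs ys = map2 (\<lambda>x y. (x + y) mod q) xs ys"

definition vsmult :: "int \<Rightarrow> int \<Rightarrow> int list \<Rightarrow> int list" where
  "vsmult q c xs = map (\<lambda>x. (c * x) mod q) xs"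

definition z4_linear_code :: "nat \<Rightarrow> int list set \<Rightarrow> bool" where
  "z4_linear_code n C \<longleftrightarrow> C \<subseteq> z4vecs n \<and> replicate n 0 \<in> C \<and>
     (\<forall>x\<in>C. \<forall>y\<in>C. vadd 4 x y \<in> C) \<and>
     (\<forall>c\<in>{0..3}. \<forall>x\<in>C. vsmult 4 c x \<in> C)"

text \<open>C is of type 4^k1 2^k2: C is isomorphic (as an additive group, equivalently as a
  Z4-module) to Z4^k1 x Z2^k2.\<close>
definition code_type :: "int list set \<Rightarrow> nat \<Rightarrow> nat \<Rightarrow> bool" where
  "code_type C k1 k2 \<longleftrightarrow> (\<exists>f. bij_betw f C (z4vecs k1 \<times> z2vecs k2) \<and>
     (\<forall>x\<in>C. \<forall>y\<in>C. f (vadd 4 x y) =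
        (vadd 4 (fst (f x)) (fst (f y)), vadd 2 (snd (f x)) (snd (f y)))))"

definition lee :: "int \<Rightarrow> nat" where
  "lee x = (if x mod 4 = 0 then 0 else if x mod 4 = 2 then 2 else 1)"

definition lee_wt :: "int list \<Rightarrow> nat" where
  "lee_wt xs = sum_list (map lee xs)"

definition lee_weights :: "nat \<Rightarrow> int list set \<Rightarrow> nat set" where
  "lee_weights n C = {lee_wt c | c. c \<in> C \<and> c \<noteq> replicate n 0}"

text \<open>minimum Lee distance = minimum nonzero Lee weight\<close>
definition min_lee_dist :: "nat \<Rightarrow> int list set \<Rightarrow> nat" where
  "min_lee_dist n C = Min (lee_weights n C)"

definition plotkin_optimal :: "nat \<Rightarrow> int list set \<Rightarrow> bool" where
  "plotkin_optimal n C \<longleftrightarrow>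
     int (min_lee_dist n C) = \<lfloor>(real (card C) / (real (card C) - 1)) * real n\<rfloor>"

definition dot4 :: "int list \<Rightarrow> int list \<Rightarrow> int" where
  "dot4 xs ys = (\<Sum>(x, y)\<leftarrow>zip xs ys. x * y) mod 4"

definition dual_code :: "nat \<Rightarrow> int list set \<Rightarrow> int list set" where
  "dual_code n C = {y \<in> z4vecs n. \<forall>x\<in>C. dot4 x y = 0}"

text \<open>projective: the dual has minimum Lee distance at least 3, i.e. every nonzero dual
  codeword has Lee weight at least 3.\<close>
definition projective :: "nat \<Rightarrow> int list set \<Rightarrow> bool" where
  "projective n C \<longleftrightarrow> (\<forall>y\<in>dual_code n C. y \<noteq> replicate n 0 \<longrightarrow> lee_wt y \<ge> 3)"

definition A_w :: "nat \<Rightarrow> int list set \<Rightarrow> nat" where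
  "A_w w D = card {c \<in> D. lee_wt c = w}"

end

theory Submission
  imports Defs
begin

lemma zvecs_card: "q \<ge> 0 \<Longrightarrow> card (zvecs q k) = nat q ^ k"
proof -
  assume "q \<ge> 0"
  have "zvecs q k = {xs. set xs \<subseteq> {0..q-1} \<and> length xs = k}" by (auto simp: zvecs_def)
  then show ?thesis using card_lists_length_eq[of "{0..q-1}" k] by simp
qed

lemma zvecs_finite: "finite (zvecs q k)"
proof -
  have "zvecs q k = {xs. set xs \<subseteq> {0..q-1} \<and> length xs = k}" by (auto simp: zvecs_def)
  then show ?thesis using finite_lists_length_eq[of "{0..q-1}" k] by simp
qed

lemma code_type_card: "code_type C k1 k2 \<Longrightarrow> card C = 4^k1 * 2^k2"
proof -
  assume "code_type C k1 k2"
  then obtain f where "bij_betw f C (z4vecs k1 \<times> z2vecs k2)" unfolding code_type_def by blast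
  then have "card C = card (z4vecs k1 \<times> z2vecs k2)" by (rule bij_betw_same_card)
  also have "\<dots> = 4^k1 * 2^k2" by (simp add: card_cartesian_product zvecs_card)
  finally show ?thesis .
qed

lemma lee_mod: "lee (x mod 4) = lee x" by (simp add: lee_def)

lemma lee_wt_nth: "lee_wt xs = (\<Sum>p<length xs. lee (xs!p))"
  by (simp add: lee_wt_def sum_list_sum_nth atLeast0LessThan)

lemma lee_wt_append: "lee_wt (xs @ ys) = lee_wt xs + lee_wt ys"
  by (simp add: lee_wt_def)

lemma lee_sub: "lee (x + y) \<le> lee x + lee y"
proof -
  have "x mod 4 \<in> {0,1,2,3}" "y mod 4 \<in> {0,1,2,3}" by auto
  moreover have "(x + y) mod 4 = (x mod 4 + y mod 4) mod 4" by (simp add: mod_simps)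
  ultimately show ?thesis unfolding lee_def by auto
qed

lemma lee_sum_le: "lee (\<Sum>j\<in>A. f j) \<le> (\<Sum>j\<in>A. lee (f j))"
proof (induction A rule: infinite_finite_induct)
  case (infinite A) then show ?case by (simp add: lee_def)
next
  case empty then show ?case by (simp add: lee_def)
next
  case (insert x F)
  then show ?case using lee_sub[of "f x" "sum f F"] by simp
qed

lemma z4_entry: "xs \<in> z4vecs N \<Longrightarrow> p < length xs \<Longrightarrow> xs!p \<in> {0,1,2,3}"
  unfolding zvecs_def using nth_mem by fastforce

lemma lee_zero_iff: "x \<in> {0,1,2,3::int} \<Longrightarrow> lee x = 0 \<longleftrightarrow> x = 0"
  by (auto simp: lee_def)

lemma lee_wt_zero: "xs \<in> z4vecs N \<Longrightarrow> lee_wt xs = 0 \<longleftrightarrow> xs = replicate N 0"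
proof -
  assume xs: "xs \<in> z4vecs N"
  then have len: "length xs = N" by (simp add: zvecs_def)
  have "lee_wt xs = 0 \<longleftrightarrow> (\<forall>p<N. lee (xs!p) = 0)" by (auto simp add: lee_wt_nth len)
  also have "\<dots> \<longleftrightarrow> (\<forall>p<N. xs!p = 0)" using z4_entry[OF xs] lee_zero_iff len by auto
  also have "\<dots> \<longleftrightarrow> xs = replicate N 0" using len by (auto simp: list_eq_iff_nth_eq)
  finally show ?thesis .
qed

lemma sum_reindex: fixes f :: "nat \<Rightarrow> 'a::comm_monoid_add" and r n :: nat
  shows "(\<Sum>p<r*n. f p) = (\<Sum>j<r. \<Sum>i<n. f (j*n+i))"
proof (induction r)
  case 0 then show ?case by simp
next
  case (Suc r)
  have "(\<Sum>p<Suc r*n. f p) = (\<Sum>p<r*n. f p) + (\<Sum>p\<in>{r*n..<r*n+n}. f p)"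
    by (simp add: sum.atLeastLessThan_concat[symmetric] lessThan_atLeast0 add.commute)
  also have "(\<Sum>p\<in>{r*n..<r*n+n}. f p) = (\<Sum>i<n. f (r*n+i))"
  proof -
    have "(\<Sum>p\<in>{0+r*n..<n+r*n}. f p) = (\<Sum>i\<in>{0..<n}. f (i + r*n))" by (rule sum.shift_bounds_nat_ivl)
    then show ?thesis by (simp add: lessThan_atLeast0 add.commute)
  qed
  finally show ?case using Suc by simp
qed

definition Tset :: "nat \<Rightarrow> int set" where
  "Tset r = (if r = 4 then {0,1,2,3} else {0,2})"

definition rep :: "nat \<Rightarrow> nat \<Rightarrow> int \<Rightarrow> int list \<Rightarrow> int list" where
  "rep r n t c = map (\<lambda>p. (c!(p mod n) + int (p div n) * t) mod 4) [0..<r*n]"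

definition step :: "nat \<Rightarrow> nat \<Rightarrow> int list set \<Rightarrow> int list set" where
  "step r n C = (\<lambda>(c,t). rep r n t c) ` (C \<times> Tset r)"

lemma length_rep[simp]: "length (rep r n t c) = r*n" by (simp add: rep_def)

lemma nth_rep: "p < r*n \<Longrightarrow> rep r n t c ! p = (c!(p mod n) + int (p div n) * t) mod 4"
  by (simp add: rep_def)

lemma nth_rep2: "j < r \<Longrightarrow> i < n \<Longrightarrow> rep r n t c ! (j*n+i) = (c!i + int j * t) mod 4"
proof -
  assume a: "j < r" "i < n"
  then have "j*n+i < r*n"
  proof -
    have "j*n+i < j*n+n" using a by simp
    also have "\<dots> = Suc j * n" by simp
    also have "\<dots> \<le> r*n" using a by (intro mult_le_mono1) simp
    finally show ?thesis .
  qed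
  then show ?thesis using a by (simp add: nth_rep)
qed

lemma rep_in: "rep r n t c \<in> z4vecs (r*n)"
  by (auto simp: zvecs_def rep_def)

lemma base4: "x \<in> {0,1,2,3::int} \<Longrightarrow> t \<in> {0,1,2,3} \<Longrightarrow>
  lee x + lee (x + t) + lee (x + 2*t) + lee (x + 3*t) = 4 * (if t = 0 then lee x else 1)"
  apply (elim insertE emptyE)
  apply (simp_all add: lee_def)
  done

lemma base2: "x \<in> {0,1,2,3::int} \<Longrightarrow> t \<in> {0,2} \<Longrightarrow>
  lee x + lee (x + t) = 2 * (if t = 0 then lee x else 1)"
  apply (elim insertE emptyE)
  apply (simp_all add: lee_def)
  done

lemma lee_sum_r: "r = 2 \<or> r = 4 \<Longrightarrow> t \<in> Tset r \<Longrightarrow> x \<in> {0,1,2,3} \<Longrightarrow>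
   (\<Sum>j<r. lee (x + int j * t)) = r * (if t = 0 then lee x else 1)"
proof -
  assume r: "r = 2 \<or> r = 4" and t: "t \<in> Tset r" and x: "x \<in> {0,1,2,3}"
  show ?thesis
  proof (cases "r = 4")
    case True
    have "(\<Sum>j<4. lee (x + int j * t)) = lee x + lee (x + t) + lee (x + 2*t) + lee (x + 3*t)"
      by (simp add: eval_nat_numeral)
    moreover have "t \<in> {0,1,2,3}" using t True by (simp add: Tset_def)
    ultimately show ?thesis using x True base4 by simp
  next
    case False
    then have r2: "r = 2" using r by simp
    have "(\<Sum>j<2. lee (x + int j * t)) = lee x + lee (x + t)"
      by (simp add: eval_nat_numeral)
    moreover have "t \<in> {0,2}" using t r2 by (simp add: Tset_def)
    ultimately show ?thesis using x r2 base2 by simp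
  qed
qed

lemma lee_wt_rep:
  assumes r: "r = 2 \<or> r = 4" and t: "t \<in> Tset r" and c: "c \<in> z4vecs n"
  shows "lee_wt (rep r n t c) = (if t = 0 then r * lee_wt c else r * n)"
proof -
  have len: "length c = n" using c by (simp add: zvecs_def)
  have "lee_wt (rep r n t c) = (\<Sum>j<r. \<Sum>i<n. lee (rep r n t c ! (j*n+i)))"
    by (simp add: lee_wt_nth sum_reindex)
  also have "\<dots> = (\<Sum>j<r. \<Sum>i<n. lee (c!i + int j * t))"
    by (intro sum.cong refl) (simp add: nth_rep2 lee_mod)
  also have "\<dots> = (\<Sum>i<n. \<Sum>j<r. lee (c!i + int j * t))" by (rule sum.swap)
  also have "\<dots> = (\<Sum>i<n. r * (if t = 0 then lee (c!i) else 1))"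
    by (intro sum.cong refl lee_sum_r[OF r t]) (use z4_entry[OF c] len in auto)
  also have "\<dots> = (if t = 0 then r * lee_wt c else r * n)"
    by (simp add: lee_wt_nth len sum_distrib_left)
  finally show ?thesis .
qed

lemma mm: "(x + j * (t mod 4)) mod 4 = (x + j*t) mod (4::int)"
  by (metis mod_add_right_eq mod_mult_right_eq)

lemma len_vadd[simp]: "length (vadd q xs ys) = min (length xs) (length ys)" by (simp add: vadd_def)
lemma nth_vadd: "i < length xs \<Longrightarrow> i < length ys \<Longrightarrow> vadd q xs ys ! i = (xs!i + ys!i) mod q"
  by (simp add: vadd_def)
lemma len_vsmult[simp]: "length (vsmult q k xs) = length xs" by (simp add: vsmult_def)
lemma nth_vsmult: "i < length xs \<Longrightarrow> vsmult q k xs ! i = (k * xs!i) mod q"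
  by (simp add: vsmult_def)

lemma vadd_rep:
  assumes "length c1 = n" "length c2 = n"
  shows "vadd 4 (rep r n t1 c1) (rep r n t2 c2) = rep r n ((t1 + t2) mod 4) (vadd 4 c1 c2)"
proof (rule nth_equalityI)
  fix p assume p: "p < length (vadd 4 (rep r n t1 c1) (rep r n t2 c2))"
  then have p': "p < r*n" by simp
  then have n: "p mod n < n" by (metis mod_less_divisor mult_0_right nat_neq_iff not_less_zero)
  show "vadd 4 (rep r n t1 c1) (rep r n t2 c2) ! p = rep r n ((t1 + t2) mod 4) (vadd 4 c1 c2) ! p"
    using p' n assms
    apply (simp add: nth_vadd nth_rep)
    apply (simp add: mod_simps mm)
    by (simp add: algebra_simps)
qed simp

lemma vsmult_rep:
  assumes "length c = n"
  shows "vsmult 4 k (rep r n t c) = rep r n ((k * t) mod 4) (vsmult 4 k c)"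
proof (rule nth_equalityI)
  fix p assume p: "p < length (vsmult 4 k (rep r n t c))"
  then have p': "p < r*n" by simp
  then have n: "p mod n < n" by (metis mod_less_divisor mult_0_right nat_neq_iff not_less_zero)
  show "vsmult 4 k (rep r n t c) ! p = rep r n ((k * t) mod 4) (vsmult 4 k c) ! p"
    using p' n assms
    apply (simp add: nth_vsmult nth_rep)
    apply (simp add: mod_simps mm)
    by (simp add: algebra_simps)
qed simp

lemma rep_zero: "rep r n 0 (replicate n 0) = replicate (r*n) 0"
proof (rule nth_equalityI)
  fix p assume p: "p < length (rep r n 0 (replicate n 0))"
  then have p': "p < r*n" by simp
  then have n: "p mod n < n" by (metis mod_less_divisor mult_0_right nat_neq_iff not_less_zero)
  show "rep r n 0 (replicate n 0) ! p = replicate (r*n) 0 ! p" using p' n by (simp add: nth_rep)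
qed simp

lemma Tset_add: "r = 2 \<or> r = 4 \<Longrightarrow> t1 \<in> Tset r \<Longrightarrow> t2 \<in> Tset r \<Longrightarrow> (t1 + t2) mod 4 \<in> Tset r"
  unfolding Tset_def by (auto split: if_splits)

lemma Tset_mult: "r = 2 \<or> r = 4 \<Longrightarrow> t \<in> Tset r \<Longrightarrow> (k * t) mod 4 \<in> Tset r"
proof -
  assume r: "r = 2 \<or> r = 4" and t: "t \<in> Tset r"
  show ?thesis
  proof (cases "r = 4")
    case True
    have "(k*t) mod 4 \<in> {0..3}" by simp
    then show ?thesis using True by (auto simp: Tset_def)
  next
    case False
    then have "t = 0 \<or> t = 2" using r t by (simp add: Tset_def)
    moreover have "(k * 2) mod 4 \<in> {0, 2::int}"
    proof -
      have "(k * 2) mod 4 = 2 * (k mod 2)" by (simp add: mult.commute mult_mod_right)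
      moreover have "k mod 2 = 0 \<or> k mod 2 = 1" by auto
      ultimately show ?thesis by auto
    qed
    ultimately show ?thesis using False r by (auto simp: Tset_def)
  qed
qed

lemma zvecs_len: "xs \<in> zvecs q n \<Longrightarrow> length xs = n" by (simp add: zvecs_def)

lemma Tset_0: "0 \<in> Tset r" by (simp add: Tset_def)
lemma Tset_sub: "Tset r \<subseteq> {0,1,2,3}" by (auto simp: Tset_def)

lemma linear_step:
  assumes C: "z4_linear_code n C" and r: "r = 2 \<or> r = 4"
  shows "z4_linear_code (r*n) (step r n C)"
proof -
  have sub: "C \<subseteq> z4vecs n" and z: "replicate n 0 \<in> C"
    and add: "\<And>x y. x \<in> C \<Longrightarrow> y \<in> C \<Longrightarrow> vadd 4 x y \<in> C"
    and sm: "\<And>k x. k \<in> {0..3} \<Longrightarrow> x \<in> C \<Longrightarrow> vsmult 4 k x \<in> C"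
    using C unfolding z4_linear_code_def by auto
  have "step r n C \<subseteq> z4vecs (r*n)" unfolding step_def using rep_in by auto
  moreover have "replicate (r*n) 0 \<in> step r n C"
    unfolding step_def
  proof (rule image_eqI[where x="(replicate n 0, 0)"])
    show "replicate (r*n) 0 = (\<lambda>(c,t). rep r n t c) (replicate n 0, 0)" by (simp add: rep_zero)
    show "(replicate n 0, 0) \<in> C \<times> Tset r" using z Tset_0 by simp
  qed
  moreover have "\<forall>x\<in>step r n C. \<forall>y\<in>step r n C. vadd 4 x y \<in> step r n C"
  proof (intro ballI)
    fix x y assume "x \<in> step r n C" "y \<in> step r n C"
    then obtain c1 t1 c2 t2 where x: "x = rep r n t1 c1" "c1 \<in> C" "t1 \<in> Tset r"
      and y: "y = rep r n t2 c2" "c2 \<in> C" "t2 \<in> Tset r" unfolding step_def by auto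
    have "length c1 = n" "length c2 = n" using sub x y zvecs_len by blast+
    then have "vadd 4 x y = rep r n ((t1 + t2) mod 4) (vadd 4 c1 c2)"
      unfolding x y by (rule vadd_rep)
    moreover have "vadd 4 c1 c2 \<in> C" using add x y by auto
    moreover have "(t1 + t2) mod 4 \<in> Tset r" using Tset_add r x y by auto
    ultimately show "vadd 4 x y \<in> step r n C" unfolding step_def
      by (intro image_eqI[where x="(vadd 4 c1 c2, (t1 + t2) mod 4)"]) auto
  qed
  moreover have "\<forall>k\<in>{0..3}. \<forall>x\<in>step r n C. vsmult 4 k x \<in> step r n C"
  proof (intro ballI)
    fix k x assume k: "k \<in> {0..(3::int)}" and "x \<in> step r n C"
    then obtain c t where x: "x = rep r n t c" "c \<in> C" "t \<in> Tset r" unfolding step_def by auto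
    have "length c = n" using sub x zvecs_len by blast
    then have "vsmult 4 k x = rep r n ((k * t) mod 4) (vsmult 4 k c)"
      unfolding x by (rule vsmult_rep)
    moreover have "vsmult 4 k c \<in> C" using sm k x by auto
    moreover have "(k * t) mod 4 \<in> Tset r" using Tset_mult r x by auto
    ultimately show "vsmult 4 k x \<in> step r n C" unfolding step_def
      by (intro image_eqI[where x="(vsmult 4 k c, (k * t) mod 4)"]) auto
  qed
  ultimately show ?thesis unfolding z4_linear_code_def by blast
qed

lemma inj_step:
  assumes sub: "C \<subseteq> z4vecs n" and n: "n > 0" and r: "r = 2 \<or> r = 4"
  shows "inj_on (\<lambda>(c,t). rep r n t c) (C \<times> Tset r)"
proof (rule inj_onI, clarify)
  fix c1 t1 c2 t2 assume c1: "c1 \<in> C" and t1: "t1 \<in> Tset r" and c2: "c2 \<in> C" and t2: "t2 \<in> Tset r"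
    and eq: "rep r n t1 c1 = rep r n t2 c2"
  have l1: "length c1 = n" and l2: "length c2 = n" using c1 c2 sub zvecs_len by auto
  have r1: "1 < r" using r by auto
  have "\<And>i. i < n \<Longrightarrow> c1 ! i = c2 ! i"
  proof -
    fix i assume i: "i < n"
    have "rep r n t1 c1 ! (0*n+i) = rep r n t2 c2 ! (0*n+i)" using eq by simp
    then have "c1!i mod 4 = c2!i mod 4" using nth_rep2[of 0 r i n] i r1 by simp
    moreover have v1: "c1 \<in> z4vecs n" "c2 \<in> z4vecs n" using sub c1 c2 by auto
    moreover have "c1!i \<in> {0,1,2,3}" using z4_entry[OF v1(1)] l1 i by simp
    moreover have "c2!i \<in> {0,1,2,3}" using z4_entry[OF v1(2)] l2 i by simp
    ultimately show "c1 ! i = c2 ! i" by auto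
  qed
  then have c12: "c1 = c2" using l1 l2 by (simp add: nth_equalityI)
  have "rep r n t1 c1 ! (1*n+0) = rep r n t2 c2 ! (1*n+0)" using eq by simp
  then have "(c1!0 + t1) mod 4 = (c1!0 + t2) mod 4" using nth_rep2[of 1 r 0 n] n r1 c12 by simp
  moreover have "c1!0 \<in> {0,1,2,3}" using z4_entry[of c1 n 0] sub c1 l1 n by auto
  moreover have "t1 \<in> {0,1,2,3}" "t2 \<in> {0,1,2,3}" using t1 t2 Tset_sub by blast+
  ultimately have "t1 = t2" by (elim insertE emptyE) simp_all
  then show "c1 = c2 \<and> t1 = t2" using c12 by simp
qed

lemma lee_wt_replicate0[simp]: "lee_wt (replicate N 0) = 0"
  by (simp add: lee_wt_def lee_def)

lemma card_Tset: "r = 2 \<or> r = 4 \<Longrightarrow> card (Tset r) = r"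
  by (auto simp: Tset_def)

lemma step_weights:
  assumes sub: "C \<subseteq> z4vecs n" and z: "replicate n 0 \<in> C" and W: "lee_weights n C = {m, n}"
    and n: "0 < n" and mn: "n < m" and r: "r = 2 \<or> r = 4"
  shows "lee_weights (r*n) (step r n C) = {r*m, r*n}"
    and "A_w (r*m) (step r n C) = A_w m C"
    and "card (step r n C) = card C * r"
proof -
  have nz: "\<And>c. c \<in> C \<Longrightarrow> c \<noteq> replicate n 0 \<Longrightarrow> lee_wt c \<in> {m, n}"
  proof -
    fix c assume "c \<in> C" "c \<noteq> replicate n 0"
    then have "lee_wt c \<in> lee_weights n C" unfolding lee_weights_def by blast
    then show "lee_wt c \<in> {m, n}" using W by simp
  qed
  have wrep: "\<And>c t. c \<in> C \<Longrightarrow> t \<in> Tset r \<Longrightarrow> lee_wt (rep r n t c) = (if t = 0 then r * lee_wt c else r * n)"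
    using lee_wt_rep[OF r] sub by blast
  have rpos: "r > 0" using r by auto
  show "lee_weights (r*n) (step r n C) = {r*m, r*n}"
  proof
    show "lee_weights (r*n) (step r n C) \<subseteq> {r*m, r*n}"
    proof
      fix w assume "w \<in> lee_weights (r*n) (step r n C)"
      then obtain c t where c: "c \<in> C" and t: "t \<in> Tset r" and w: "w = lee_wt (rep r n t c)"
        and ne: "rep r n t c \<noteq> replicate (r*n) 0"
        unfolding lee_weights_def step_def by auto
      show "w \<in> {r*m, r*n}"
      proof (cases "t = 0")
        case True
        then have "c \<noteq> replicate n 0" using ne rep_zero[of r n] by auto
        then show ?thesis using nz[OF c] w wrep[OF c t] True by auto
      next
        case False then show ?thesis using w wrep[OF c t] by simp
      qed
    qed
  next
    have "m \<in> lee_weights n C" using W by simp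
    then obtain c where c: "c \<in> C" "c \<noteq> replicate n 0" "lee_wt c = m"
      unfolding lee_weights_def by blast
    have w1: "lee_wt (rep r n 0 c) = r*m" using wrep[OF c(1) Tset_0] c by simp
    have "rep r n 0 c \<noteq> replicate (r*n) 0"
    proof
      assume "rep r n 0 c = replicate (r*n) 0"
      then have "lee_wt (rep r n 0 c) = 0" by simp
      then show False using w1 mn rpos by simp
    qed
    moreover have "rep r n 0 c \<in> step r n C" unfolding step_def using c(1) Tset_0
      by (intro image_eqI[where x="(c, 0)"]) auto
    ultimately have "r*m \<in> lee_weights (r*n) (step r n C)" using w1[symmetric] unfolding lee_weights_def by blast
    moreover
    have t2: "2 \<in> Tset r" by (simp add: Tset_def)
    have w2: "lee_wt (rep r n 2 (replicate n 0)) = r*n" using wrep[OF z t2] by simp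
    have "rep r n 2 (replicate n 0) \<noteq> replicate (r*n) 0"
    proof
      assume "rep r n 2 (replicate n 0) = replicate (r*n) 0"
      then have "lee_wt (rep r n 2 (replicate n 0)) = 0" by simp
      then show False using w2 n rpos by simp
    qed
    moreover have "rep r n 2 (replicate n 0) \<in> step r n C" unfolding step_def using z t2
      by (intro image_eqI[where x="(replicate n 0, 2)"]) auto
    ultimately have "r*n \<in> lee_weights (r*n) (step r n C)" using w2[symmetric] unfolding lee_weights_def by blast
    then show "{r*m, r*n} \<subseteq> lee_weights (r*n) (step r n C)" using \<open>r*m \<in> lee_weights (r*n) (step r n C)\<close> by simp
  qed
  have inj: "inj_on (\<lambda>(c,t). rep r n t c) (C \<times> Tset r)" by (rule inj_step[OF sub n r])
  have fin: "finite C" using sub zvecs_finite finite_subset by blast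
  show "card (step r n C) = card C * r"
    unfolding step_def by (simp add: card_image[OF inj] card_cartesian_product card_Tset[OF r])
  have inj0: "inj_on (\<lambda>c. rep r n 0 c) C"
  proof (rule inj_onI)
    fix x y assume "x \<in> C" "y \<in> C" "rep r n 0 x = rep r n 0 y"
    then have "(\<lambda>(c,t). rep r n t c) (x, 0) = (\<lambda>(c,t). rep r n t c) (y, 0)" by simp
    moreover have "(x, 0) \<in> C \<times> Tset r" "(y, 0) \<in> C \<times> Tset r" using \<open>x \<in> C\<close> \<open>y \<in> C\<close> Tset_0 by auto
    ultimately have "(x, 0::int) = (y, 0)" using inj_onD[OF inj] by blast
    then show "x = y" by simp
  qed
  have eqs: "{w \<in> step r n C. lee_wt w = r*m} = (\<lambda>c. rep r n 0 c) ` {c \<in> C. lee_wt c = m}"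
  proof
    show "{w \<in> step r n C. lee_wt w = r*m} \<subseteq> (\<lambda>c. rep r n 0 c) ` {c \<in> C. lee_wt c = m}"
    proof
      fix w assume wA: "w \<in> {w \<in> step r n C. lee_wt w = r*m}"
      then have ws: "w \<in> step r n C" and ww: "lee_wt w = r*m" by auto
      from ws obtain c t where c: "c \<in> C" and t: "t \<in> Tset r" and w: "w = rep r n t c"
        unfolding step_def by auto
      have "t = 0"
      proof (rule ccontr)
        assume "t \<noteq> 0" then have "r*n = r*m" using ww w wrep[OF c t] by simp
        then show False using mn rpos by simp
      qed
      then have "lee_wt c = m" using ww w wrep[OF c t] rpos by simp
      then have "c \<in> {c \<in> C. lee_wt c = m}" using c by simp
      then have "rep r n 0 c \<in> (\<lambda>c. rep r n 0 c) ` {c \<in> C. lee_wt c = m}" by (rule imageI)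
      then show "w \<in> (\<lambda>c. rep r n 0 c) ` {c \<in> C. lee_wt c = m}" using w \<open>t = 0\<close> by simp
    qed
    show "(\<lambda>c. rep r n 0 c) ` {c \<in> C. lee_wt c = m} \<subseteq> {w \<in> step r n C. lee_wt w = r*m}"
    proof
      fix w assume "w \<in> (\<lambda>c. rep r n 0 c) ` {c \<in> C. lee_wt c = m}"
      then obtain c where c: "c \<in> C" "lee_wt c = m" and w: "w = rep r n 0 c" by auto
      have "w \<in> step r n C" unfolding step_def w using c Tset_0
        by (intro image_eqI[where x="(c, 0)"]) auto
      moreover have "lee_wt w = r*m" using wrep[OF c(1) Tset_0] c w by simp
      ultimately show "w \<in> {w \<in> step r n C. lee_wt w = r*m}" by simp
    qed
  qed
  have inj1: "inj_on (\<lambda>c. rep r n 0 c) {c \<in> C. lee_wt c = m}"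
    by (rule inj_on_subset[OF inj0]) auto
  have "card {w \<in> step r n C. lee_wt w = r*m} = card {c \<in> C. lee_wt c = m}"
    unfolding eqs by (rule card_image[OF inj1])
  then show "A_w (r*m) (step r n C) = A_w m C" by (simp add: A_w_def)
qed


lemma dot4_nth: "length xs = length ys \<Longrightarrow> dot4 xs ys = (\<Sum>p<length xs. xs!p * ys!p) mod 4"
proof -
  assume l: "length xs = length ys"
  have "(\<Sum>(x, y)\<leftarrow>zip xs ys. x * y) = (\<Sum>p<length (zip xs ys). (\<lambda>(x,y). x*y) (zip xs ys ! p))"
    by (simp add: sum_list_sum_nth atLeast0LessThan)
  also have "\<dots> = (\<Sum>p<length xs. xs!p * ys!p)" using l by simp
  finally show ?thesis by (simp add: dot4_def)
qed

lemma sum_prod_reindex: fixes f :: "nat \<Rightarrow> 'a::comm_monoid_add"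
  shows "(\<Sum>p<r*n. f p) = (\<Sum>q\<in>{..<r}\<times>{..<n}. f (fst q * n + snd q))"
  by (simp add: sum_reindex sum.cartesian_product case_prod_beta)

lemma sum_two: "finite P \<Longrightarrow> a \<in> P \<Longrightarrow> b \<in> P \<Longrightarrow> a \<noteq> b \<Longrightarrow>
  sum f P = f a + f b + sum f (P - {a, b})"
proof -
  assume P: "finite P" "a \<in> P" "b \<in> P" "a \<noteq> b"
  have "sum f P = f a + sum f (P - {a})" using P by (simp add: sum.remove)
  also have "sum f (P - {a}) = f b + sum f (P - {a} - {b})" using P by (intro sum.remove) auto
  also have "P - {a} - {b} = P - {a, b}" by auto
  finally show ?thesis by (simp add: add.assoc)
qed

lemma final_check:
  assumes r: "r = 2 \<or> r = 4" and j0: "j0 < r" and j1: "j1 < r" and ne: "j0 \<noteq> j1"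
    and v0: "v0 \<in> {1,3::int}" and v1: "v1 \<in> {1,3::int}" and s: "(v0 + v1) mod 4 = 0"
    and d: "((int j0 * (if r = 4 then 1 else 2)) mod 4 * v0 + (int j1 * (if r = 4 then 1 else 2)) mod 4 * v1) mod 4 = 0"
  shows False
proof -
  have "j0 \<in> {0,1,2,3}" "j1 \<in> {0,1,2,3}" using j0 j1 r by auto
  then show False using r j0 j1 ne v0 v1 s d
    by (elim insertE emptyE disjE) simp_all
qed

lemma dot_rep:
  assumes lc: "length c = n" and ly: "length y = r*n"
  shows "dot4 (rep r n t c) y =
    (\<Sum>q\<in>{..<r}\<times>{..<n}. ((c!(snd q) + int (fst q) * t) mod 4) * y!(fst q * n + snd q)) mod 4"
proof -
  have "dot4 (rep r n t c) y = (\<Sum>p<r*n. rep r n t c ! p * y!p) mod 4"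
    using ly by (simp add: dot4_nth)
  also have "(\<Sum>p<r*n. rep r n t c ! p * y!p) =
     (\<Sum>q\<in>{..<r}\<times>{..<n}. rep r n t c ! (fst q * n + snd q) * y!(fst q * n + snd q))"
    by (rule sum_prod_reindex)
  also have "\<dots> = (\<Sum>q\<in>{..<r}\<times>{..<n}. ((c!(snd q) + int (fst q) * t) mod 4) * y!(fst q * n + snd q))"
    by (intro sum.cong refl) (auto simp: nth_rep2)
  finally show ?thesis .
qed

lemma lee_wt_prod:
  assumes ly: "length y = r*n"
  shows "lee_wt y = (\<Sum>q\<in>{..<r}\<times>{..<n}. lee (y!(fst q * n + snd q)))"
  using ly by (simp add: lee_wt_nth sum_prod_reindex)

lemma idx_lt: "j < r \<Longrightarrow> i < (n::nat) \<Longrightarrow> j*n+i < r*n"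
proof -
  assume a: "j < r" "i < n"
  have "j*n+i < j*n+n" using a by simp
  also have "\<dots> = Suc j * n" by simp
  also have "\<dots> \<le> r*n" using a by (intro mult_le_mono1) simp
  finally show ?thesis .
qed

lemma proj_step:
  assumes sub: "C \<subseteq> z4vecs n" and z: "replicate n 0 \<in> C" and P: "projective n C"
    and n: "0 < n" and r: "r = 2 \<or> r = 4"
  shows "projective (r*n) (step r n C)"
  unfolding projective_def
proof (intro ballI impI)
  fix y assume yd: "y \<in> dual_code (r*n) (step r n C)" and ynz: "y \<noteq> replicate (r*n) 0"
  have yv: "y \<in> z4vecs (r*n)" and yo: "\<And>x. x \<in> step r n C \<Longrightarrow> dot4 x y = 0"
    using yd unfolding dual_code_def by auto
  have ly: "length y = r*n" using yv zvecs_len by blast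
  define PP where "PP = {..<r}\<times>{..<n}"
  define Y where "Y = (\<lambda>q. y!(fst q * n + snd q))"
  have finPP: "finite PP" unfolding PP_def by simp
  have Yent: "\<And>q. q \<in> PP \<Longrightarrow> Y q \<in> {0,1,2,3}"
  proof -
    fix q assume "q \<in> PP"
    then have "fst q * n + snd q < length y" unfolding PP_def using ly idx_lt by (cases q) auto
    then show "Y q \<in> {0,1,2,3}" unfolding Y_def by (rule z4_entry[OF yv])
  qed
  have lwy: "lee_wt y = (\<Sum>q\<in>PP. lee (Y q))" unfolding PP_def Y_def by (rule lee_wt_prod[OF ly])
  show "3 \<le> lee_wt y"
  proof (rule ccontr)
    assume "\<not> 3 \<le> lee_wt y"
    then have small: "lee_wt y \<le> 2" by simp
    define S where "S = (\<lambda>i. \<Sum>j<r. Y (j, i))"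
    define s where "s = map (\<lambda>i. S i mod 4) [0..<n]"
    have sv: "s \<in> z4vecs n" unfolding s_def zvecs_def by auto
    have ls: "length s = n" unfolding s_def by simp
    have "s \<in> dual_code n C"
      unfolding dual_code_def
    proof (intro CollectI conjI ballI sv)
      fix c assume c: "c \<in> C"
      have lc: "length c = n" using c sub zvecs_len by blast
      have cent: "\<And>i. i < n \<Longrightarrow> c!i mod 4 = c!i"
        using z4_entry[of c n] c sub lc by fastforce
      have "rep r n 0 c \<in> step r n C" unfolding step_def using c Tset_0
        by (intro image_eqI[where x="(c, 0)"]) auto
      then have "dot4 (rep r n 0 c) y = 0" by (rule yo)
      then have e1: "(\<Sum>q\<in>PP. (c!(snd q) mod 4) * Y q) mod 4 = 0"
        using dot_rep[OF lc ly, of 0] unfolding PP_def Y_def by simp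
      have "(\<Sum>q\<in>PP. (c!(snd q) mod 4) * Y q) = (\<Sum>q\<in>PP. c!(snd q) * Y q)"
        by (intro sum.cong refl) (auto simp: PP_def cent)
      also have "\<dots> = (\<Sum>j<r. \<Sum>i<n. c!i * Y (j,i))"
        unfolding PP_def by (simp add: sum.cartesian_product case_prod_beta)
      also have "\<dots> = (\<Sum>i<n. \<Sum>j<r. c!i * Y (j,i))" by (rule sum.swap)
      also have "\<dots> = (\<Sum>i<n. c!i * S i)" by (simp add: S_def sum_distrib_left)
      finally have e2: "(\<Sum>i<n. c!i * S i) mod 4 = 0" using e1 by simp
      have "dot4 c s = (\<Sum>i<n. c!i * s!i) mod 4" using lc ls by (simp add: dot4_nth)
      also have "\<dots> = (\<Sum>i<n. c!i * (S i mod 4)) mod 4"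
        by (intro arg_cong[where f="\<lambda>x. x mod 4"] sum.cong refl) (simp add: s_def)
      also have "\<dots> = (\<Sum>i<n. (c!i * (S i mod 4)) mod 4) mod 4" by (simp add: mod_sum_eq)
      also have "\<dots> = (\<Sum>i<n. (c!i * S i) mod 4) mod 4" by (simp add: mod_mult_right_eq)
      also have "\<dots> = (\<Sum>i<n. c!i * S i) mod 4" by (simp add: mod_sum_eq)
      finally show "dot4 c s = 0" using e2 by simp
    qed
    moreover have "lee_wt s \<le> 2"
    proof -
      have "lee_wt s = (\<Sum>i<n. lee (s!i))" using ls by (simp add: lee_wt_nth)
      also have "\<dots> = (\<Sum>i<n. lee (S i))" by (intro sum.cong refl) (simp add: s_def lee_mod)
      also have "\<dots> \<le> (\<Sum>i<n. \<Sum>j<r. lee (Y (j,i)))"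
        unfolding S_def by (intro sum_mono lee_sum_le)
      also have "\<dots> = (\<Sum>j<r. \<Sum>i<n. lee (Y (j,i)))" by (rule sum.swap)
      also have "\<dots> = (\<Sum>q\<in>PP. lee (Y q))"
        unfolding PP_def by (simp add: sum.cartesian_product case_prod_beta)
      finally show ?thesis using lwy small by simp
    qed
    moreover have "s \<in> dual_code n C \<longrightarrow> s \<noteq> replicate n 0 \<longrightarrow> 3 \<le> lee_wt s"
      using P unfolding projective_def by blast
    ultimately have s0: "s = replicate n 0" by linarith
    have S0: "\<And>i. i < n \<Longrightarrow> S i mod 4 = 0"
    proof -
      fix i assume "i < n"
      then have "s!i = 0" using s0 by simp
      then show "S i mod 4 = 0" using \<open>i < n\<close> by (simp add: s_def)
    qed
    have "\<exists>p. p < r*n \<and> y!p \<noteq> 0"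
    proof (rule ccontr)
      assume "\<not> (\<exists>p. p < r*n \<and> y!p \<noteq> 0)"
      then have "\<forall>p<r*n. y!p = 0" by blast
      then have "y = replicate (r*n) 0" using ly by (simp add: list_eq_iff_nth_eq)
      then show False using ynz by simp
    qed
    then obtain p where p: "p < r*n" "y!p \<noteq> 0" by blast
    define a where "a = (p div n, p mod n)"
    have aP: "a \<in> PP" unfolding a_def PP_def using p n
      by (simp add: less_mult_imp_div_less)
    have Ya: "Y a \<noteq> 0" unfolding a_def Y_def using p by simp
    have "\<exists>j1. j1 < r \<and> j1 \<noteq> fst a \<and> Y (j1, snd a) \<noteq> 0"
    proof (rule ccontr)
      assume "\<not> (\<exists>j1. j1 < r \<and> j1 \<noteq> fst a \<and> Y (j1, snd a) \<noteq> 0)"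
      then have others: "\<And>j. j < r \<Longrightarrow> j \<noteq> fst a \<Longrightarrow> Y (j, snd a) = 0" by blast
      have fa: "fst a \<in> {..<r}" and sa: "snd a < n" using aP unfolding PP_def by auto
      have "S (snd a) = Y (fst a, snd a) + (\<Sum>j\<in>{..<r} - {fst a}. Y (j, snd a))"
        unfolding S_def using fa by (simp add: sum.remove)
      also have "(\<Sum>j\<in>{..<r} - {fst a}. Y (j, snd a)) = 0" using others by (intro sum.neutral) auto
      finally have "S (snd a) = Y a" by simp
      moreover have "Y a \<in> {1,2,3}" using Yent[OF aP] Ya by auto
      ultimately have "S (snd a) mod 4 \<noteq> 0" by auto
      then show False using S0 sa by simp
    qed
    then obtain j1 where j1: "j1 < r" "j1 \<noteq> fst a" "Y (j1, snd a) \<noteq> 0" by blast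
    define b where "b = (j1, snd a)"
    have bP: "b \<in> PP" unfolding b_def PP_def using j1 aP PP_def by auto
    have ab: "a \<noteq> b" unfolding b_def using j1 by (cases a) auto
    have Yb: "Y b \<noteq> 0" unfolding b_def using j1 by simp
    have lpos: "\<And>q. q \<in> PP \<Longrightarrow> Y q \<noteq> 0 \<Longrightarrow> lee (Y q) \<ge> 1"
    proof -
      fix q assume "q \<in> PP" "Y q \<noteq> 0"
      then have "Y q \<in> {1,2,3}" using Yent by blast
      then show "lee (Y q) \<ge> 1" by (auto simp: lee_def)
    qed
    have split: "(\<Sum>q\<in>PP. lee (Y q)) = lee (Y a) + lee (Y b) + (\<Sum>q\<in>PP - {a,b}. lee (Y q))"
      by (rule sum_two[OF finPP aP bP ab])
    have la: "lee (Y a) \<ge> 1" and lb: "lee (Y b) \<ge> 1" using lpos aP bP Ya Yb by auto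
    have rest0: "(\<Sum>q\<in>PP - {a,b}. lee (Y q)) = 0" and la1: "lee (Y a) = 1" and lb1: "lee (Y b) = 1"
      using split la lb lwy small by linarith+
    have Yrest: "\<And>q. q \<in> PP - {a,b} \<Longrightarrow> Y q = 0"
    proof -
      fix q assume q: "q \<in> PP - {a,b}"
      then have "lee (Y q) = 0" using rest0 finPP by (simp add: sum_eq_0_iff)
      then show "Y q = 0" using Yent q lee_zero_iff by blast
    qed
    have va: "Y a \<in> {1,3}" using Yent[OF aP] la1 by (auto simp: lee_def)
    have vb: "Y b \<in> {1,3}" using Yent[OF bP] lb1 by (auto simp: lee_def)
    have Ssum: "S (snd a) = Y a + Y b"
    proof -
      have fa: "fst a \<in> {..<r}" and j1': "j1 \<in> {..<r}" using aP j1 unfolding PP_def by auto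
      have "S (snd a) = (\<Sum>j\<in>{..<r}. Y (j, snd a))" by (simp add: S_def)
      also have "\<dots> = Y (fst a, snd a) + Y (j1, snd a) + (\<Sum>j\<in>{..<r} - {fst a, j1}. Y (j, snd a))"
        by (rule sum_two) (use fa j1' j1 in auto)
      also have "(\<Sum>j\<in>{..<r} - {fst a, j1}. Y (j, snd a)) = 0"
      proof (intro sum.neutral ballI)
        fix j assume j: "j \<in> {..<r} - {fst a, j1}"
        then have "(j, snd a) \<in> PP - {a,b}" using aP unfolding PP_def b_def by (cases a) auto
        then show "Y (j, snd a) = 0" by (rule Yrest)
      qed
      finally show ?thesis by (simp add: b_def)
    qed
    have sab: "(Y a + Y b) mod 4 = 0" using S0[of "snd a"] aP Ssum unfolding PP_def by auto
    define t0 :: int where "t0 = (if r = 4 then 1 else 2)"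
    have t0T: "t0 \<in> Tset r" unfolding t0_def Tset_def by auto
    have "rep r n t0 (replicate n 0) \<in> step r n C" unfolding step_def using z t0T
      by (intro image_eqI[where x="(replicate n 0, t0)"]) auto
    then have "dot4 (rep r n t0 (replicate n 0)) y = 0" by (rule yo)
    then have d0: "(\<Sum>q\<in>PP. ((replicate n 0 ! snd q + int (fst q) * t0) mod 4) * Y q) mod 4 = 0"
      using dot_rep[of "replicate n 0" n y r t0] ly unfolding PP_def Y_def by simp
    have "(\<Sum>q\<in>PP. ((replicate n 0 ! snd q + int (fst q) * t0) mod 4) * Y q) =
          (\<Sum>q\<in>PP. ((int (fst q) * t0) mod 4) * Y q)"
      by (intro sum.cong refl) (auto simp: PP_def)
    then have d1: "(\<Sum>q\<in>PP. ((int (fst q) * t0) mod 4) * Y q) mod 4 = 0" using d0 by simp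
    have "(\<Sum>q\<in>PP. ((int (fst q) * t0) mod 4) * Y q) =
       ((int (fst a) * t0) mod 4) * Y a + ((int (fst b) * t0) mod 4) * Y b +
       (\<Sum>q\<in>PP - {a,b}. ((int (fst q) * t0) mod 4) * Y q)"
      by (rule sum_two[OF finPP aP bP ab])
    also have "(\<Sum>q\<in>PP - {a,b}. ((int (fst q) * t0) mod 4) * Y q) = 0"
      using Yrest by (intro sum.neutral) auto
    finally have d2: "(((int (fst a) * t0) mod 4) * Y a + ((int j1 * t0) mod 4) * Y b) mod 4 = 0"
      using d1 by (simp add: b_def)
    have "fst a < r" using aP unfolding PP_def by auto
    show False
      using final_check[OF r \<open>fst a < r\<close> j1(1) j1(2)[symmetric] va vb sab] d2 unfolding t0_def by simp
  qed
qed


lemma type_transfer: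
  assumes inj: "inj_on g A" and img: "g ` A = D" and hb: "bij_betw h A (z4vecs k1 \<times> z2vecs k2)"
    and hom: "\<And>p1 p2. p1 \<in> A \<Longrightarrow> p2 \<in> A \<Longrightarrow> \<exists>p3\<in>A. vadd 4 (g p1) (g p2) = g p3 \<and>
        h p3 = (vadd 4 (fst (h p1)) (fst (h p2)), vadd 2 (snd (h p1)) (snd (h p2)))"
  shows "code_type D k1 k2"
  unfolding code_type_def
proof (intro exI conjI ballI)
  define f' where "f' = h \<circ> inv_into A g"
  have "bij_betw g A D" using inj img by (simp add: bij_betw_def)
  then have "bij_betw (inv_into A g) D A" by (rule bij_betw_inv_into)
  then show "bij_betw (h \<circ> inv_into A g) D (z4vecs k1 \<times> z2vecs k2)" using hb by (rule bij_betw_trans)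
  fix x y assume x: "x \<in> D" and y: "y \<in> D"
  obtain p1 where p1: "p1 \<in> A" "x = g p1" using x img by blast
  obtain p2 where p2: "p2 \<in> A" "y = g p2" using y img by blast
  obtain p3 where p3: "p3 \<in> A" "vadd 4 (g p1) (g p2) = g p3"
    "h p3 = (vadd 4 (fst (h p1)) (fst (h p2)), vadd 2 (snd (h p1)) (snd (h p2)))"
    using hom[OF p1(1) p2(1)] by blast
  have i1: "inv_into A g x = p1" using p1 inj by (simp add: inv_into_f_f)
  have i2: "inv_into A g y = p2" using p2 inj by (simp add: inv_into_f_f)
  have i3: "inv_into A g (vadd 4 x y) = p3" using p1 p2 p3 inj by (simp add: inv_into_f_f)
  show "(h \<circ> inv_into A g) (vadd 4 x y) =
     (vadd 4 (fst ((h \<circ> inv_into A g) x)) (fst ((h \<circ> inv_into A g) y)),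
      vadd 2 (snd ((h \<circ> inv_into A g) x)) (snd ((h \<circ> inv_into A g) y)))"
    using i1 i2 i3 p3 by simp
qed

lemma vadd_snoc: "length xs = length ys \<Longrightarrow> vadd q (xs @ [x]) (ys @ [y]) = vadd q xs ys @ [(x + y) mod q]"
  by (simp add: vadd_def)

lemma zvecs_snoc: "(xs @ [x] \<in> zvecs q (Suc k)) = (xs \<in> zvecs q k \<and> x \<in> {0..q-1})"
  by (auto simp: zvecs_def)

lemma zvecs_Suc_split: "u \<in> zvecs q (Suc k) \<Longrightarrow> u = butlast u @ [last u] \<and> butlast u \<in> zvecs q k \<and> last u \<in> {0..q-1}"
proof -
  assume u: "u \<in> zvecs q (Suc k)"
  then have "u \<noteq> []" by (auto simp: zvecs_def)
  then have e: "u = butlast u @ [last u]" by simp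
  then have "butlast u @ [last u] \<in> zvecs q (Suc k)" using u by simp
  then show ?thesis using e zvecs_snoc by blast
qed

lemma Tset4: "Tset 4 = {0..3}" by (auto simp: Tset_def)

lemma type_step4:
  assumes T: "code_type C k1 k2" and sub: "C \<subseteq> z4vecs n"
    and add: "\<And>x y. x \<in> C \<Longrightarrow> y \<in> C \<Longrightarrow> vadd 4 x y \<in> C" and n: "0 < n"
  shows "code_type (step 4 n C) (Suc k1) k2"
proof -
  obtain f where fb: "bij_betw f C (z4vecs k1 \<times> z2vecs k2)"
    and fh': "\<forall>x\<in>C. \<forall>y\<in>C. f (vadd 4 x y) =
        (vadd 4 (fst (f x)) (fst (f y)), vadd 2 (snd (f x)) (snd (f y)))"
    using T unfolding code_type_def by (elim exE conjE) (rule that)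
  have fh: "\<And>x y. x \<in> C \<Longrightarrow> y \<in> C \<Longrightarrow> f (vadd 4 x y) =
        (vadd 4 (fst (f x)) (fst (f y)), vadd 2 (snd (f x)) (snd (f y)))"
    using fh' by blast
  have finj: "inj_on f C" by (rule bij_betw_imp_inj_on[OF fb])
  have fin: "\<And>c. c \<in> C \<Longrightarrow> f c \<in> z4vecs k1 \<times> z2vecs k2" by (rule bij_betw_apply[OF fb])
  have fsurj: "f ` C = z4vecs k1 \<times> z2vecs k2" by (rule bij_betw_imp_surj_on[OF fb])
  define h where "h = (\<lambda>(c::int list, t::int). (fst (f c) @ [t], snd (f c)))"
  have hb: "bij_betw h (C \<times> Tset 4) (z4vecs (Suc k1) \<times> z2vecs k2)"
    unfolding bij_betw_def
  proof (intro conjI)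
    show "inj_on h (C \<times> Tset 4)"
    proof (rule inj_onI, clarify)
      fix c1 t1 c2 t2 assume c1: "c1 \<in> C" and c2: "c2 \<in> C" and e: "h (c1, t1) = h (c2, t2)"
      then have "fst (f c1) = fst (f c2)" "t1 = t2" "snd (f c1) = snd (f c2)" unfolding h_def by auto
      then have "f c1 = f c2" by (simp add: prod_eq_iff)
      then have "c1 = c2" using finj c1 c2 inj_onD by metis
      then show "c1 = c2 \<and> t1 = t2" using \<open>t1 = t2\<close> by simp
    qed
    show "h ` (C \<times> Tset 4) = z4vecs (Suc k1) \<times> z2vecs k2"
    proof
      show "h ` (C \<times> Tset 4) \<subseteq> z4vecs (Suc k1) \<times> z2vecs k2"
      proof
        fix w assume "w \<in> h ` (C \<times> Tset 4)"
        then obtain c t where c: "c \<in> C" and t: "t \<in> Tset 4" and w: "w = h (c, t)" by auto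
        have "fst (f c) \<in> z4vecs k1" "snd (f c) \<in> z2vecs k2" using fin[OF c] by auto
        moreover have "t \<in> {0..4-1}" using t Tset4 by simp
        ultimately show "w \<in> z4vecs (Suc k1) \<times> z2vecs k2"
          unfolding w h_def by (simp add: zvecs_snoc)
      qed
      show "z4vecs (Suc k1) \<times> z2vecs k2 \<subseteq> h ` (C \<times> Tset 4)"
      proof
        fix w assume "w \<in> z4vecs (Suc k1) \<times> z2vecs k2"
        then obtain u v where w: "w = (u, v)" and u: "u \<in> z4vecs (Suc k1)" and v: "v \<in> z2vecs k2" by auto
        have us: "u = butlast u @ [last u]" "butlast u \<in> z4vecs k1" "last u \<in> {0..3}"
          using zvecs_Suc_split[OF u] by auto
        then have "(butlast u, v) \<in> f ` C" using fsurj v by auto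
        then obtain c where c: "c \<in> C" "f c = (butlast u, v)" by auto
        have "h (c, last u) = (u, v)" unfolding h_def using c us by simp
        moreover have "(c, last u) \<in> C \<times> Tset 4" using c us Tset4 by simp
        ultimately show "w \<in> h ` (C \<times> Tset 4)" unfolding w by (rule image_eqI[OF sym])
      qed
    qed
  qed
  have r: "(4::nat) = 2 \<or> (4::nat) = 4" by simp
  show ?thesis
  proof (rule type_transfer[OF inj_step[OF sub n r] _ hb])
    show "(\<lambda>(c,t). rep 4 n t c) ` (C \<times> Tset 4) = step 4 n C" by (simp add: step_def)
  next
    fix p1 p2 assume p1: "p1 \<in> C \<times> Tset 4" and p2: "p2 \<in> C \<times> Tset 4"
    obtain c1 t1 where q1: "p1 = (c1, t1)" "c1 \<in> C" "t1 \<in> Tset 4" using p1 by auto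
    obtain c2 t2 where q2: "p2 = (c2, t2)" "c2 \<in> C" "t2 \<in> Tset 4" using p2 by auto
    have l1: "length c1 = n" and l2: "length c2 = n" using q1 q2 sub zvecs_len by blast+
    have p3: "(vadd 4 c1 c2, (t1 + t2) mod 4) \<in> C \<times> Tset 4"
      using add q1 q2 Tset_add[OF r] by auto
    have ge: "vadd 4 (rep 4 n t1 c1) (rep 4 n t2 c2) = rep 4 n ((t1 + t2) mod 4) (vadd 4 c1 c2)"
      by (rule vadd_rep[OF l1 l2])
    have "fst (f c1) \<in> z4vecs k1" "fst (f c2) \<in> z4vecs k1" using fin[OF q1(2)] fin[OF q2(2)] by auto
    then have lf1: "length (fst (f c1)) = k1" and lf2: "length (fst (f c2)) = k1" using zvecs_len by auto
    have he: "h (vadd 4 c1 c2, (t1 + t2) mod 4) =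
       (vadd 4 (fst (h p1)) (fst (h p2)), vadd 2 (snd (h p1)) (snd (h p2)))"
      unfolding h_def q1 q2 using fh[OF q1(2) q2(2)] lf1 lf2 by (simp add: vadd_snoc)
    show "\<exists>p3\<in>C \<times> Tset 4. vadd 4 ((\<lambda>(c,t). rep 4 n t c) p1) ((\<lambda>(c,t). rep 4 n t c) p2) =
            (\<lambda>(c,t). rep 4 n t c) p3 \<and>
          h p3 = (vadd 4 (fst (h p1)) (fst (h p2)), vadd 2 (snd (h p1)) (snd (h p2)))"
      using p3 ge he q1 q2 by auto
  qed
qed

lemma type_step2:
  assumes T: "code_type C k1 k2" and sub: "C \<subseteq> z4vecs n"
    and add: "\<And>x y. x \<in> C \<Longrightarrow> y \<in> C \<Longrightarrow> vadd 4 x y \<in> C" and n: "0 < n"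
  shows "code_type (step 2 n C) k1 (Suc k2)"
proof -
  obtain f where fb: "bij_betw f C (z4vecs k1 \<times> z2vecs k2)"
    and fh': "\<forall>x\<in>C. \<forall>y\<in>C. f (vadd 4 x y) =
        (vadd 4 (fst (f x)) (fst (f y)), vadd 2 (snd (f x)) (snd (f y)))"
    using T unfolding code_type_def by (elim exE conjE) (rule that)
  have fh: "\<And>x y. x \<in> C \<Longrightarrow> y \<in> C \<Longrightarrow> f (vadd 4 x y) =
        (vadd 4 (fst (f x)) (fst (f y)), vadd 2 (snd (f x)) (snd (f y)))"
    using fh' by blast
  have finj: "inj_on f C" by (rule bij_betw_imp_inj_on[OF fb])
  have fin: "\<And>c. c \<in> C \<Longrightarrow> f c \<in> z4vecs k1 \<times> z2vecs k2" by (rule bij_betw_apply[OF fb])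
  have fsurj: "f ` C = z4vecs k1 \<times> z2vecs k2" by (rule bij_betw_imp_surj_on[OF fb])
  define h where "h = (\<lambda>(c::int list, t::int). (fst (f c), snd (f c) @ [t div 2]))"
  have hb: "bij_betw h (C \<times> Tset 2) (z4vecs k1 \<times> z2vecs (Suc k2))"
    unfolding bij_betw_def
  proof (intro conjI)
    show "inj_on h (C \<times> Tset 2)"
    proof (rule inj_onI, clarify)
      fix c1 t1 c2 t2 assume c1: "c1 \<in> C" and c2: "c2 \<in> C" and e: "h (c1, t1) = h (c2, t2)"
      assume t1: "t1 \<in> Tset 2" and t2: "t2 \<in> Tset 2"
      have "fst (f c1) = fst (f c2)" "t1 div 2 = t2 div 2" "snd (f c1) = snd (f c2)" using e unfolding h_def by auto
      moreover have "t1 \<in> {0,2}" "t2 \<in> {0,2}" using t1 t2 by (auto simp: Tset_def)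
      ultimately have "fst (f c1) = fst (f c2)" "t1 = t2" "snd (f c1) = snd (f c2)" by auto
      then have "f c1 = f c2" by (simp add: prod_eq_iff)
      then have "c1 = c2" using finj c1 c2 inj_onD by metis
      then show "c1 = c2 \<and> t1 = t2" using \<open>t1 = t2\<close> by simp
    qed
    show "h ` (C \<times> Tset 2) = z4vecs k1 \<times> z2vecs (Suc k2)"
    proof
      show "h ` (C \<times> Tset 2) \<subseteq> z4vecs k1 \<times> z2vecs (Suc k2)"
      proof
        fix w assume "w \<in> h ` (C \<times> Tset 2)"
        then obtain c t where c: "c \<in> C" and t: "t \<in> Tset 2" and w: "w = h (c, t)" by auto
        have "fst (f c) \<in> z4vecs k1" "snd (f c) \<in> z2vecs k2" using fin[OF c] by auto
        moreover have "t div 2 \<in> {0..2-1}" using t by (auto simp: Tset_def)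
        ultimately show "w \<in> z4vecs k1 \<times> z2vecs (Suc k2)"
          unfolding w h_def by (simp add: zvecs_snoc)
      qed
      show "z4vecs k1 \<times> z2vecs (Suc k2) \<subseteq> h ` (C \<times> Tset 2)"
      proof
        fix w assume "w \<in> z4vecs k1 \<times> z2vecs (Suc k2)"
        then obtain u v where w: "w = (u, v)" and u: "u \<in> z4vecs k1" and v: "v \<in> z2vecs (Suc k2)" by auto
        have vs: "v = butlast v @ [last v]" "butlast v \<in> z2vecs k2" "last v \<in> {0..1}"
          using zvecs_Suc_split[OF v] by auto
        then have "(u, butlast v) \<in> f ` C" using fsurj u by auto
        then obtain c where c: "c \<in> C" "f c = (u, butlast v)" by auto
        have "h (c, 2 * last v) = (u, v)" unfolding h_def using c vs by simp
        moreover have "2 * last v \<in> Tset 2" using vs by (auto simp: Tset_def)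
        then have "(c, 2 * last v) \<in> C \<times> Tset 2" using c by simp
        ultimately show "w \<in> h ` (C \<times> Tset 2)" unfolding w by (rule image_eqI[OF sym])
      qed
    qed
  qed
  have r: "(2::nat) = 2 \<or> (2::nat) = 4" by simp
  show ?thesis
  proof (rule type_transfer[OF inj_step[OF sub n r] _ hb])
    show "(\<lambda>(c,t). rep 2 n t c) ` (C \<times> Tset 2) = step 2 n C" by (simp add: step_def)
  next
    fix p1 p2 assume p1: "p1 \<in> C \<times> Tset 2" and p2: "p2 \<in> C \<times> Tset 2"
    obtain c1 t1 where q1: "p1 = (c1, t1)" "c1 \<in> C" "t1 \<in> Tset 2" using p1 by auto
    obtain c2 t2 where q2: "p2 = (c2, t2)" "c2 \<in> C" "t2 \<in> Tset 2" using p2 by auto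
    have l1: "length c1 = n" and l2: "length c2 = n" using q1 q2 sub zvecs_len by blast+
    have p3: "(vadd 4 c1 c2, (t1 + t2) mod 4) \<in> C \<times> Tset 2"
      using add q1 q2 Tset_add[OF r] by auto
    have ge: "vadd 4 (rep 2 n t1 c1) (rep 2 n t2 c2) = rep 2 n ((t1 + t2) mod 4) (vadd 4 c1 c2)"
      by (rule vadd_rep[OF l1 l2])
    have "snd (f c1) \<in> z2vecs k2" "snd (f c2) \<in> z2vecs k2" using fin[OF q1(2)] fin[OF q2(2)] by auto
    then have lf1: "length (snd (f c1)) = k2" and lf2: "length (snd (f c2)) = k2" using zvecs_len by auto
    have "t1 \<in> {0,2}" "t2 \<in> {0,2}" using q1 q2 by (auto simp: Tset_def)
    then have tt: "((t1 + t2) mod 4) div 2 = (t1 div 2 + t2 div 2) mod 2" by auto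
    have he: "h (vadd 4 c1 c2, (t1 + t2) mod 4) =
       (vadd 4 (fst (h p1)) (fst (h p2)), vadd 2 (snd (h p1)) (snd (h p2)))"
      unfolding h_def q1 q2 using fh[OF q1(2) q2(2)] lf1 lf2 tt by (simp add: vadd_snoc)
    show "\<exists>p3\<in>C \<times> Tset 2. vadd 4 ((\<lambda>(c,t). rep 2 n t c) p1) ((\<lambda>(c,t). rep 2 n t c) p2) =
            (\<lambda>(c,t). rep 2 n t c) p3 \<and>
          h p3 = (vadd 4 (fst (h p1)) (fst (h p2)), vadd 2 (snd (h p1)) (snd (h p2)))"
      using p3 ge he q1 q2 by auto
  qed
qed


definition good :: "nat \<Rightarrow> nat \<Rightarrow> nat \<Rightarrow> nat \<Rightarrow> int list set \<Rightarrow> bool" where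
  "good n k1 k2 m C \<longleftrightarrow> z4_linear_code n C \<and> code_type C k1 k2 \<and> projective n C \<and>
     lee_weights n C = {m, n} \<and> n < m \<and> 0 < n \<and> n + 2 \<le> card C"

lemma good_step:
  assumes g: "good n k1 k2 m C" and r: "r = 2 \<or> r = 4"
  shows "z4_linear_code (r*n) (step r n C) \<and> projective (r*n) (step r n C) \<and>
     lee_weights (r*n) (step r n C) = {r*m, r*n} \<and> r*n < r*m \<and> 0 < r*n \<and> r*n + 2 \<le> card (step r n C)
     \<and> A_w (r*m) (step r n C) = A_w m C"
proof -
  have L: "z4_linear_code n C" and W: "lee_weights n C = {m, n}" and mn: "n < m" and n: "0 < n"
    and P: "projective n C" and cC: "n + 2 \<le> card C"
    using g unfolding good_def by auto
  have sub: "C \<subseteq> z4vecs n" and z: "replicate n 0 \<in> C" using L unfolding z4_linear_code_def by auto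
  have rp: "r > 0" "r \<ge> 2" using r by auto
  have "r*n + 2 \<le> r*n + r*2" using rp by simp
  also have "\<dots> = r*(n+2)" by (simp add: algebra_simps)
  also have "\<dots> \<le> r * card C" using cC by (intro mult_le_mono2)
  finally have cc: "r*n + 2 \<le> card C * r" by (simp add: mult.commute)
  show ?thesis
    using linear_step[OF L r] proj_step[OF sub z P n r] step_weights[OF sub z W n mn r] cc rp mn n
    by simp
qed

lemma good_step4:
  assumes g: "good n k1 k2 m C"
  shows "good (4*n) (Suc k1) k2 (4*m) (step 4 n C) \<and> A_w (4*m) (step 4 n C) = A_w m C"
proof -
  have L: "z4_linear_code n C" and T: "code_type C k1 k2" and n: "0 < n" using g unfolding good_def by auto
  have sub: "C \<subseteq> z4vecs n" and add: "\<And>x y. x \<in> C \<Longrightarrow> y \<in> C \<Longrightarrow> vadd 4 x y \<in> C"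
    using L unfolding z4_linear_code_def by auto
  have "code_type (step 4 n C) (Suc k1) k2" by (rule type_step4[OF T sub add n])
  then show ?thesis using good_step[OF g, of 4] unfolding good_def by simp
qed

lemma good_step2:
  assumes g: "good n k1 k2 m C"
  shows "good (2*n) k1 (Suc k2) (2*m) (step 2 n C) \<and> A_w (2*m) (step 2 n C) = A_w m C"
proof -
  have L: "z4_linear_code n C" and T: "code_type C k1 k2" and n: "0 < n" using g unfolding good_def by auto
  have sub: "C \<subseteq> z4vecs n" and add: "\<And>x y. x \<in> C \<Longrightarrow> y \<in> C \<Longrightarrow> vadd 4 x y \<in> C"
    using L unfolding z4_linear_code_def by auto
  have "code_type (step 2 n C) k1 (Suc k2)" by (rule type_step2[OF T sub add n])
  then show ?thesis using good_step[OF g, of 2] unfolding good_def by simp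
qed

lemma iter4: "good n k1 k2 m C \<Longrightarrow> \<exists>C'. good (4^a*n) (k1+a) k2 (4^a*m) C' \<and> A_w (4^a*m) C' = A_w m C"
proof (induction a)
  case 0 then show ?case by auto
next
  case (Suc a)
  then obtain C' where C': "good (4^a*n) (k1+a) k2 (4^a*m) C'" "A_w (4^a*m) C' = A_w m C" by blast
  have "good (4*(4^a*n)) (Suc (k1+a)) k2 (4*(4^a*m)) (step 4 (4^a*n) C') \<and>
        A_w (4*(4^a*m)) (step 4 (4^a*n) C') = A_w (4^a*m) C'" by (rule good_step4[OF C'(1)])
  then show ?case using C'(2) by (intro exI[of _ "step 4 (4^a*n) C'"]) (simp add: mult.assoc)
qed

lemma iter2: "good n k1 k2 m C \<Longrightarrow> \<exists>C'. good (2^b*n) k1 (k2+b) (2^b*m) C' \<and> A_w (2^b*m) C' = A_w m C"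
proof (induction b)
  case 0 then show ?case by auto
next
  case (Suc b)
  then obtain C' where C': "good (2^b*n) k1 (k2+b) (2^b*m) C'" "A_w (2^b*m) C' = A_w m C" by blast
  have "good (2*(2^b*n)) k1 (Suc (k2+b)) (2*(2^b*m)) (step 2 (2^b*n) C') \<and>
        A_w (2*(2^b*m)) (step 2 (2^b*n) C') = A_w (2^b*m) C'" by (rule good_step2[OF C'(1)])
  then show ?case using C'(2) by (intro exI[of _ "step 2 (2^b*n) C'"]) (simp add: mult.assoc)
qed

lemma plotkin_iff:
  assumes M: "2 \<le> M" 
  shows "(int N = \<lfloor>(real M / (real M - 1)) * real N\<rfloor>) \<longleftrightarrow> N + 2 \<le> M"
proof -
  have M1: "real M - 1 > 0" using M by simp
  have x: "(real M / (real M - 1)) * real N = real N + real N / (real M - 1)"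
    using M1 by (simp add: field_simps)
  have "(int N = \<lfloor>(real M / (real M - 1)) * real N\<rfloor>) \<longleftrightarrow>
      real N \<le> real N + real N / (real M - 1) \<and> real N + real N / (real M - 1) < real N + 1"
    unfolding x by (simp add: floor_eq_iff eq_commute[of "int N"])
  also have "\<dots> \<longleftrightarrow> real N / (real M - 1) < 1" using M1 by simp
  also have "\<dots> \<longleftrightarrow> real N < real M - 1" using M1 by simp
  also have "\<dots> \<longleftrightarrow> N + 2 \<le> M" by linarith
  finally show ?thesis .
qed

lemma good_final:
  assumes g: "good N K1 K2 W D"
  shows "plotkin_optimal N D \<and> min_lee_dist N D = N \<and>
     int (A_w N D) = 4^K1 * 2^K2 - 1 - int (A_w W D)"
proof -
  have L: "z4_linear_code N D" and T: "code_type D K1 K2" and Wt: "lee_weights N D = {W, N}"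
    and NW: "N < W" and N: "0 < N" and cD: "N + 2 \<le> card D"
    using g unfolding good_def by auto
  have sub: "D \<subseteq> z4vecs N" and z: "replicate N 0 \<in> D" using L unfolding z4_linear_code_def by auto
  have fin: "finite D" using sub zvecs_finite finite_subset by blast
  have md: "min_lee_dist N D = N" unfolding min_lee_dist_def Wt using NW by simp
  have "int (min_lee_dist N D) = \<lfloor>(real (card D) / (real (card D) - 1)) * real N\<rfloor>"
    unfolding md using plotkin_iff[of "card D" N] cD by simp
  then have po: "plotkin_optimal N D" unfolding plotkin_optimal_def .
  define A where "A = {c \<in> D. lee_wt c = W}"
  define B where "B = {c \<in> D. lee_wt c = N}"
  have part: "D = insert (replicate N 0) (A \<union> B)"
  proof
    show "D \<subseteq> insert (replicate N 0) (A \<union> B)"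
    proof
      fix c assume c: "c \<in> D"
      show "c \<in> insert (replicate N 0) (A \<union> B)"
      proof (cases "c = replicate N 0")
        case False
        then have "lee_wt c \<in> lee_weights N D" using c unfolding lee_weights_def by blast
        then have "lee_wt c \<in> {W, N}" using Wt by simp
        then show ?thesis using c unfolding A_def B_def by auto
      qed simp
    qed
    show "insert (replicate N 0) (A \<union> B) \<subseteq> D" using z unfolding A_def B_def by auto
  qed
  have finA: "finite A" "finite B" using fin unfolding A_def B_def by auto
  have disj: "A \<inter> B = {}" using NW unfolding A_def B_def by auto
  have notin: "replicate N 0 \<notin> A \<union> B" using NW N unfolding A_def B_def by auto
  have "card D = Suc (card (A \<union> B))"
    using finA notin by (subst part) (simp add: card_insert_disjoint)
  also have "card (A \<union> B) = card A + card B" using finA disj by (rule card_Un_disjoint)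
  finally have cD1: "int (card B) = int (card D) - 1 - int (card A)" by simp
  have "card D = 4^K1 * 2^K2" by (rule code_type_card[OF T])
  then have "int (card D) = 4^K1 * 2^K2" by simp
  with cD1 have "int (card B) = 4^K1 * 2^K2 - 1 - int (card A)" by simp
  then show ?thesis using po md unfolding A_w_def A_def B_def by simp
qed

lemma good_init:
  assumes "z4_linear_code n C" and "code_type C k1 k2" and "plotkin_optimal n C"
    and "projective n C" and "min_lee_dist n C = n"
    and "lee_weights n C = {m, n}" and "m \<noteq> n"
  shows "good n k1 k2 m C"
proof -
  have sub: "C \<subseteq> z4vecs n" and z: "replicate n 0 \<in> C" using assms(1) unfolding z4_linear_code_def by auto
  have fin: "finite C" using sub zvecs_finite finite_subset by blast
  have "n \<in> lee_weights n C" using assms(6) by simp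
  then obtain c where c: "c \<in> C" "c \<noteq> replicate n 0" "lee_wt c = n" unfolding lee_weights_def by blast
  have "lee_wt c \<noteq> 0" using lee_wt_zero[of c n] c sub by auto
  then have n: "0 < n" using c by simp
  have "Min {m, n} = n" using assms(5,6) unfolding min_lee_dist_def by simp
  then have "min m n = n" by simp
  then have "n \<le> m" by (auto simp: min_def split: if_splits)
  then have mn: "n < m" using assms(7) by simp
  have "{replicate n 0, c} \<subseteq> C" using z c by simp
  then have "card {replicate n 0, c} \<le> card C" using fin by (rule card_mono[rotated])
  then have M2: "2 \<le> card C" using c(2) by simp
  have "int (min_lee_dist n C) = \<lfloor>(real (card C) / (real (card C) - 1)) * real n\<rfloor>"
    using assms(3) unfolding plotkin_optimal_def .
  then have "n + 2 \<le> card C" using plotkin_iff[OF M2, of n] assms(5) by simp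
  then show ?thesis unfolding good_def using assms n mn by simp
qed

theorem theorem5p4:
  fixes C :: "int list set" and k1 k2 n m a b :: nat
  assumes "z4_linear_code n C"
    and "code_type C k1 k2"
    and "plotkin_optimal n C"
    and "projective n C"
    and "min_lee_dist n C = n"
    and "lee_weights n C = {m, n}" and "m \<noteq> n"
    and "a + b > 0"
  shows "\<exists>C'. z4_linear_code (4^a * 2^b * n) C'
    \<and> code_type C' (k1 + a) (k2 + b)
    \<and> plotkin_optimal (4^a * 2^b * n) C'
    \<and> projective (4^a * 2^b * n) C'
    \<and> min_lee_dist (4^a * 2^b * n) C' = 4^a * 2^b * n
    \<and> lee_weights (4^a * 2^b * n) C' = {4^a * 2^b * m, 4^a * 2^b * n}
    \<and> A_w (4^a * 2^b * m) C' = A_w m C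
    \<and> int (A_w (4^a * 2^b * n) C') = 4^(k1 + a) * 2^(k2 + b) - 1 - int (A_w m C)"
proof -
  have g0: "good n k1 k2 m C" using good_init assms(1-7) by blast
  obtain C1 where C1: "good (4^a*n) (k1+a) k2 (4^a*m) C1" "A_w (4^a*m) C1 = A_w m C"
    using iter4[OF g0] by blast
  obtain C2 where C2: "good (2^b*(4^a*n)) (k1+a) (k2+b) (2^b*(4^a*m)) C2"
    "A_w (2^b*(4^a*m)) C2 = A_w (4^a*m) C1"
    using iter2[OF C1(1)] by blast
  have e1: "2^b*(4^a*n) = 4^a * 2^b * n" and e2: "2^b*(4^a*m) = 4^a * 2^b * m" by (simp_all add: ac_simps)
  have g: "good (4^a * 2^b * n) (k1+a) (k2+b) (4^a * 2^b * m) C2" using C2(1) unfolding e1 e2 .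
  have aw: "A_w (4^a * 2^b * m) C2 = A_w m C" using C2(2) C1(2) unfolding e2 by simp
  show ?thesis
    using g good_final[OF g] aw unfolding good_def by (intro exI[of _ C2]) simp
qed

end
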